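(* Every regular normal extremal that is time-optimal for the problem below has at most two switching times, i.e. consists of at most three arcs. Moreover its bang pattern (ordered sequence of arc types) is either $X$ or $X\,Y\,X$; in particular, the only pattern with at least one switching is $XYX$ (global–local–global).
   Context: Fix $\gamma\in(0,\pi/2)$, $s=\sin\gamma$, $c=\cos\gamma$, and $X=\begin{pmatrix}0&s^2&sc\\-s^2&0&0\\-sc&0&0\end{pmatrix}$ (continuous-limit generator of the global Grover operator), $Y=\begin{pmatrix}0&1&0\\-1&0&0\\0&0&0\end{pmatrix}$ (generator of the local Grover operator), acting on $\mathbb R^3$ with standard basis $e_1,e_2,e_3$ and standard inner product. Let $\Sigma=\{\psi:\langle e_3,\psi\rangle=0\}$, $\psi_0=(0,s,c)^\top$. Time-optimal problem: over piecewise constant controls $A:[0,T]\to\{X,Y\}$ with finitely many discontinuities (switching times) and trajectories $\dot\psi=A(t)\psi$, $\psi(0)=\psi_0$, minimize $T$ subject to $\psi(T)\in\Sigma$. Maximal intervals on which $A\equiv X$ (resp. $Y$) are $X$-arcs (resp. $Y$-arcs). A normal extremal is such a trajectory with a nonzero absolutely continuous costate $p$ satisfying $\dot p=-A(t)^\top p$ and, for a.e. $t$, $\langle p,A(t)\psi\rangle-1=\max_{B\in\{X,Y\}}(\langle p,B\psi\rangle-1)$. Let $F_1=X-Y$, $F_2=[X,Y]$, $\phi_1=\langle p,F_1\psi\rangle$ (the switching function), $\phi_2=\langle p,F_2\psi\rangle$. A normal extremal is regular (bang–bang) if $\phi_1$ vanishes only at isolated times and at every switching time $\phi_1=0$ and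 $\phi_2\neq0$. *)

theory Defs
  imports "HOL-Analysis.Analysis"
begin

text \<open>Vectors are in real^3, matrices in real^3^3 (row i of M is M$i, so M *v x is the usual product).\<close>

definition Xm :: "real \<Rightarrow> real^3^3" where
  "Xm \<gamma> = (let s = sin \<gamma>; c = cos \<gamma> in
     vector [vector [0, s^2, s*c], vector [-(s^2), 0, 0], vector [-(s*c), 0, 0]])"

definition Ym :: "real^3^3" where
  "Ym = vector [vector [0, 1, 0], vector [-1, 0, 0], vector [0, 0, 0]]"

definition psi0 :: "real \<Rightarrow> real^3" where
  "psi0 \<gamma> = vector [0, sin \<gamma>, cos \<gamma>]"

definition inSigma :: "real^3 \<Rightarrow> bool" where
  "inSigma \<psi> \<longleftrightarrow> \<psi> \<bullet> axis 3 1 = 0"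

definition control_disc :: "(real \<Rightarrow> real^3^3) \<Rightarrow> real \<Rightarrow> real set" where
  "control_disc A T = {t \<in> {0..T}. \<not> continuous (at t within {0..T}) A}"

definition switching_times :: "(real \<Rightarrow> real^3^3) \<Rightarrow> real \<Rightarrow> real set" where
  "switching_times A T = {t \<in> {0<..<T}. \<not> continuous (at t within {0..T}) A}"

definition admissible :: "real \<Rightarrow> (real \<Rightarrow> real^3^3) \<Rightarrow> (real \<Rightarrow> real^3) \<Rightarrow> real \<Rightarrow> bool" where
  "admissible \<gamma> A \<psi> T \<longleftrightarrow>
     0 \<le> T \<and> (\<forall>t\<in>{0..T}. A t \<in> {Xm \<gamma>, Ym}) \<and> finite (control_disc A T) \<and>
     continuous_on {0..T} \<psi> \<and> \<psi> 0 = psi0 \<gamma> \<and>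
     (\<forall>t \<in> {0..T} - control_disc A T.
        (\<psi> has_vector_derivative (A t *v \<psi> t)) (at t within {0..T}))"

definition time_optimal :: "real \<Rightarrow> (real \<Rightarrow> real^3^3) \<Rightarrow> (real \<Rightarrow> real^3) \<Rightarrow> real \<Rightarrow> bool" where
  "time_optimal \<gamma> A \<psi> T \<longleftrightarrow>
     admissible \<gamma> A \<psi> T \<and> inSigma (\<psi> T) \<and>
     (\<forall>A' \<psi>' T'. admissible \<gamma> A' \<psi>' T' \<and> inSigma (\<psi>' T') \<longrightarrow> T \<le> T')"

definition normal_extremal ::
  "real \<Rightarrow> (real \<Rightarrow> real^3^3) \<Rightarrow> (real \<Rightarrow> real^3) \<Rightarrow> real \<Rightarrow> (real \<Rightarrow> real^3) \<Rightarrow> bool" where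
  "normal_extremal \<gamma> A \<psi> T p \<longleftrightarrow>
     admissible \<gamma> A \<psi> T \<and> continuous_on {0..T} p \<and> (\<exists>t\<in>{0..T}. p t \<noteq> 0) \<and>
     (\<forall>t \<in> {0..T} - control_disc A T.
        (p has_vector_derivative (- (transpose (A t) *v p t))) (at t within {0..T})) \<and>
     (AE t in lborel. t \<in> {0..T} \<longrightarrow>
        p t \<bullet> (A t *v \<psi> t) - 1 =
          max (p t \<bullet> (Xm \<gamma> *v \<psi> t) - 1) (p t \<bullet> (Ym *v \<psi> t) - 1))"

definition F1 :: "real \<Rightarrow> real^3^3" where
  "F1 \<gamma> = Xm \<gamma> - Ym"

definition F2 :: "real \<Rightarrow> real^3^3" where
  "F2 \<gamma> = Xm \<gamma> ** Ym - Ym ** Xm \<gamma>"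

definition phi1 :: "real \<Rightarrow> (real \<Rightarrow> real^3) \<Rightarrow> (real \<Rightarrow> real^3) \<Rightarrow> real \<Rightarrow> real" where
  "phi1 \<gamma> \<psi> p t = p t \<bullet> (F1 \<gamma> *v \<psi> t)"

definition phi2 :: "real \<Rightarrow> (real \<Rightarrow> real^3) \<Rightarrow> (real \<Rightarrow> real^3) \<Rightarrow> real \<Rightarrow> real" where
  "phi2 \<gamma> \<psi> p t = p t \<bullet> (F2 \<gamma> *v \<psi> t)"

definition regular_extremal ::
  "real \<Rightarrow> (real \<Rightarrow> real^3^3) \<Rightarrow> (real \<Rightarrow> real^3) \<Rightarrow> real \<Rightarrow> (real \<Rightarrow> real^3) \<Rightarrow> bool" where
  "regular_extremal \<gamma> A \<psi> T p \<longleftrightarrow>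
     normal_extremal \<gamma> A \<psi> T p \<and>
     (\<forall>t\<in>{0..T}. phi1 \<gamma> \<psi> p t = 0 \<longrightarrow>
        (\<exists>e>0. \<forall>u\<in>{0..T}. phi1 \<gamma> \<psi> p u = 0 \<and> \<bar>u - t\<bar> < e \<longrightarrow> u = t)) \<and>
     (\<forall>t \<in> switching_times A T. phi1 \<gamma> \<psi> p t = 0 \<and> phi2 \<gamma> \<psi> p t \<noteq> 0)"

definition bang_pattern :: "(real \<Rightarrow> real^3^3) \<Rightarrow> real \<Rightarrow> (real^3^3) list" where
  "bang_pattern A T =
     (let ts = sorted_list_of_set (switching_times A T); pts = 0 # ts @ [T]
      in map (\<lambda>i. A ((pts ! i + pts ! Suc i) / 2)) [0..<length ts + 1])"

end

theory Submission
  imports Defs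
begin


lemma Xm_nth: "Xm g $ 1 $ 1 = 0" "Xm g $ 1 $ 2 = sin g ^ 2" "Xm g $ 1 $ 3 = sin g * cos g"
  "Xm g $ 2 $ 1 = -(sin g ^ 2)" "Xm g $ 2 $ 2 = 0" "Xm g $ 2 $ 3 = 0"
  "Xm g $ 3 $ 1 = -(sin g * cos g)" "Xm g $ 3 $ 2 = 0" "Xm g $ 3 $ 3 = 0"
  by (simp_all add: Xm_def Let_def)

lemma Ym_nth: "Ym $ 1 $ 1 = 0" "Ym $ 1 $ 2 = 1" "Ym $ 1 $ 3 = 0"
  "Ym $ 2 $ 1 = -1" "Ym $ 2 $ 2 = 0" "Ym $ 2 $ 3 = 0"
  "Ym $ 3 $ 1 = 0" "Ym $ 3 $ 2 = 0" "Ym $ 3 $ 3 = 0"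
  by (simp_all add: Ym_def)

lemma Xm_mv: "(Xm g *v v) $ 1 = sin g ^ 2 * v $ 2 + sin g * cos g * v $ 3"
  "(Xm g *v v) $ 2 = -(sin g ^ 2) * v $ 1" "(Xm g *v v) $ 3 = -(sin g * cos g) * v $ 1"
  by (simp_all add: matrix_vector_mult_def sum_3 Xm_nth)

lemma Ym_mv: "(Ym *v v) $ 1 = v $ 2" "(Ym *v v) $ 2 = - v $ 1" "(Ym *v v) $ 3 = 0"
  by (simp_all add: matrix_vector_mult_def sum_3 Ym_nth)


lemma mat3_eq: "(M::real^3^3) = N \<longleftrightarrow> (\<forall>i j. M $ i $ j = N $ i $ j)"
  by (simp add: vec_eq_iff)

lemma F1_nth: "F1 g $ i $ j = Xm g $ i $ j - Ym $ i $ j"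
  by (simp add: F1_def)

lemma F2_X_nth: "F2 g = vector [vector [0,0,0], vector [0,0,sin g * cos g], vector [0, -(sin g * cos g), 0]]"
  unfolding mat3_eq forall_3 F2_def
  by (simp add: matrix_matrix_mult_def sum_3 Xm_nth Ym_nth)


lemma F2_nth: "F2 g $ 1 $ 1 = 0" "F2 g $ 1 $ 2 = 0" "F2 g $ 1 $ 3 = 0"
  "F2 g $ 2 $ 1 = 0" "F2 g $ 2 $ 2 = 0" "F2 g $ 2 $ 3 = sin g * cos g"
  "F2 g $ 3 $ 1 = 0" "F2 g $ 3 $ 2 = -(sin g * cos g)" "F2 g $ 3 $ 3 = 0"
  by (simp_all add: F2_X_nth)

lemma cc_rule: "cos (g::real) * (cos g * x) = x - sin g * (sin g * (x::real))"
proof -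
  have h: "cos g * cos g = 1 - sin g * sin g" using sin_cos_squared_add[of g] by (simp add: power2_eq_square algebra_simps)
  show ?thesis unfolding mult.assoc[symmetric] h by (simp add: algebra_simps)
qed

lemma F1_X: "F1 g ** Xm g - Xm g ** F1 g = F2 g"
  unfolding mat3_eq forall_3
  by (simp add: matrix_matrix_mult_def sum_3 F1_nth F2_nth Xm_nth Ym_nth algebra_simps power2_eq_square)

lemma F1_Y: "F1 g ** Ym - Ym ** F1 g = F2 g"
  unfolding mat3_eq forall_3
  by (simp add: matrix_matrix_mult_def sum_3 F1_nth F2_nth Xm_nth Ym_nth algebra_simps power2_eq_square)

lemma F2_X: "F2 g ** Xm g - Xm g ** F2 g = - ((sin g)^2 *\<^sub>R F1 g)"
proof -
  have e: "\<And>x. cos g * (cos g * x) = x - sin g * (sin g * x)" by (rule cc_rule)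
  show ?thesis
  unfolding mat3_eq forall_3
  by (simp add: matrix_matrix_mult_def sum_3 F1_nth F2_nth Xm_nth Ym_nth algebra_simps power2_eq_square e)
qed

lemma F1_psi0: "F1 g *v psi0 g = 0"
proof -
  have e: "\<And>x. cos g * (cos g * x) = x - sin g * (sin g * x)" by (rule cc_rule)
  show ?thesis
  by (simp add: vec_eq_iff forall_3 matrix_vector_mult_def sum_3 F1_nth psi0_def Xm_nth Ym_nth algebra_simps power2_eq_square e)
qed

lemma rot_lemma:
  fixes f g :: "real \<Rightarrow> real"
  assumes ab: "a \<le> b" and cf: "continuous_on {a..b} f" and cg: "continuous_on {a..b} g"
    and df: "\<And>t. a < t \<Longrightarrow> t < b \<Longrightarrow> (f has_real_derivative k * g t) (at t)"
    and dg: "\<And>t. a < t \<Longrightarrow> t < b \<Longrightarrow> (g has_real_derivative -(k * f t)) (at t)"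
    and t: "t \<in> {a..b}"
  shows "f t = f a * cos (k*(t-a)) + g a * sin (k*(t-a))"
    and "g t = g a * cos (k*(t-a)) - f a * sin (k*(t-a))"
proof -
  define U where "U x = f x * cos (k*(x-a)) - g x * sin (k*(x-a))" for x
  define V where "V x = f x * sin (k*(x-a)) + g x * cos (k*(x-a))" for x
  have UV: "U t = f a \<and> V t = g a"
  proof (cases "t = a")
    case True then show ?thesis by (simp add: U_def V_def)
  next
    case False
    with t have at: "a < t" by auto
    have cU: "continuous_on {a..t} U" "continuous_on {a..t} V"
      unfolding U_def V_def using t
      by (auto intro!: continuous_intros intro: continuous_on_subset[OF cf] continuous_on_subset[OF cg])
    have dU: "DERIV U x :> 0" "DERIV V x :> 0" if "a < x" "x < t" for x
    proof -
      have x: "a < x" "x < b" using that t by auto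
      have d1: "((\<lambda>x. k*(x-a)) has_real_derivative k) (at x)"
        by (rule derivative_eq_intros refl)+ simp
      have "DERIV U x :> (k * g x) * cos (k*(x-a)) + (- sin (k*(x-a)) * k) * f x
            - ((-(k * f x)) * sin (k*(x-a)) + (cos (k*(x-a)) * k) * g x)"
        unfolding U_def
        by (intro DERIV_diff DERIV_mult df[OF x] dg[OF x] DERIV_fun_cos DERIV_fun_sin d1)
      then show "DERIV U x :> 0" by (simp add: algebra_simps)
      have "DERIV V x :> (k * g x) * sin (k*(x-a)) + (cos (k*(x-a)) * k) * f x
            + ((-(k * f x)) * cos (k*(x-a)) + (- sin (k*(x-a)) * k) * g x)"
        unfolding V_def
        by (intro DERIV_add DERIV_mult df[OF x] dg[OF x] DERIV_fun_cos DERIV_fun_sin d1)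
      then show "DERIV V x :> 0" by (simp add: algebra_simps)
    qed
    have "U t = U a" by (rule DERIV_isconst_end[OF at cU(1) dU(1)])
    moreover have "V t = V a" by (rule DERIV_isconst_end[OF at cU(2) dU(2)])
    ultimately show ?thesis by (simp add: U_def V_def)
  qed
  define C where "C = cos (k*(t-a))"
  define S where "S = sin (k*(t-a))"
  have e: "C * C + S * S = 1" unfolding C_def S_def by (simp flip: power2_eq_square)
  have "f t = U t * C + V t * S"
    unfolding U_def V_def C_def[symmetric] S_def[symmetric]
  proof -
    have "f t * C * C + f t * S * S = f t * (C*C + S*S)" by (simp add: algebra_simps)
    then show "f t = (f t * C - g t * S) * C + (f t * S + g t * C) * S" using e by (simp add: algebra_simps)
  qed
  then show "f t = f a * cos (k*(t-a)) + g a * sin (k*(t-a))" using UV by (simp add: C_def S_def)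
  have "g t = V t * C - U t * S"
    unfolding U_def V_def C_def[symmetric] S_def[symmetric]
  proof -
    have "g t * C * C + g t * S * S = g t * (C*C + S*S)" by (simp add: algebra_simps)
    then show "g t = (f t * S + g t * C) * C - (f t * C - g t * S) * S" using e by (simp add: algebra_simps)
  qed
  then show "g t = g a * cos (k*(t-a)) - f a * sin (k*(t-a))" using UV by (simp add: C_def S_def)
qed

lemma xarc_lemma:
  fixes f1 f2 :: "real \<Rightarrow> real"
  assumes s: "0 < s" and ab: "a < b" "s * (b - a) < pi"
    and c1: "continuous_on {a..b} f1" and c2: "continuous_on {a..b} f2"
    and d1: "\<And>t. a < t \<Longrightarrow> t < b \<Longrightarrow> (f1 has_real_derivative f2 t) (at t)"
    and d2: "\<And>t. a < t \<Longrightarrow> t < b \<Longrightarrow> (f2 has_real_derivative -(s^2 * f1 t)) (at t)"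
    and z: "f1 a = 0" "f1 b = 0"
  shows "\<forall>t\<in>{a..b}. f1 t = 0"
proof -
  define g where "g t = f2 t / s" for t
  have cg: "continuous_on {a..b} g" unfolding g_def by (intro continuous_intros c2) (use s in auto)
  have dfa: "(f1 has_real_derivative s * g t) (at t)" if "a < t" "t < b" for t
    using d1[OF that] s by (simp add: g_def)
  have dga: "(g has_real_derivative -(s * f1 t)) (at t)" if "a < t" "t < b" for t
    using DERIV_cdivide[OF d2[OF that], of s] s unfolding g_def[abs_def] by (simp add: power2_eq_square)
  note R = rot_lemma(1)[of a b f1 g s, OF _ c1 cg dfa dga]
  have "f1 b = f1 a * cos (s*(b-a)) + g a * sin (s*(b-a))" using R[of b] ab by auto
  moreover have "sin (s*(b-a)) > 0" using ab s by (intro sin_gt_zero) auto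
  ultimately have "g a = 0" using z by simp
  then show ?thesis using R ab z by auto
qed

lemma sin_ineq1:
  fixes s t :: real
  assumes s: "0 < s" "s < 1" and t: "0 < t" "t \<le> pi/2"
  shows "s * sin t < sin (s * t)"
proof -
  define h where "h x = sin (s * x) - s * sin x" for x
  have ch: "continuous_on {0..t} h" unfolding h_def by (intro continuous_intros)
  have dh: "(h has_derivative (*) (s * cos (s*x) - s * cos x)) (at x)" for x
    unfolding h_def has_field_derivative_def[symmetric]
    by (rule derivative_eq_intros refl | simp add: algebra_simps)+
  obtain xi where xi: "0 < xi" "xi < t" "h t - h 0 = (s * cos (s*xi) - s * cos xi) * (t - 0)"
    using mvt[OF t(1) ch dh] by blast
  have "cos xi < cos (s * xi)"
    using xi s t by (intro cos_monotone_0_pi) (auto simp: mult_less_cancel_right2 intro: order.trans[of _ t])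
  then have "0 < (s * cos (s*xi) - s * cos xi) * (t - 0)" using s t by (simp add: algebra_simps)
  then show ?thesis using xi by (simp add: h_def)
qed

lemma sin_ineq:
  fixes s t :: real
  assumes s: "0 < s" "s < 1" and t: "0 < t" "s * t \<le> pi/2"
  shows "s * sin t < sin (s * t)"
proof (cases "t \<le> pi/2")
  case True then show ?thesis using sin_ineq1 s t by auto
next
  case False
  have "0 \<le> s * pi" using s by simp
  have "s * sin t \<le> s" using s by (simp add: mult_left_le)
  also have "s = s * sin (pi/2)" by simp
  also have "\<dots> < sin (s * (pi/2))" using sin_ineq1[OF s, of "pi/2"] by simp
  also have "\<dots> \<le> sin (s * t)"
  proof (rule sin_monotone_2pi_le)
    have "0 \<le> s * (pi / 2)" using s by simp
    then show "- (pi / 2) \<le> s * (pi / 2)" using pi_gt_zero by linarith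
    show "s * (pi / 2) \<le> s * t" using False s by (intro mult_left_mono) auto
    show "s * t \<le> pi / 2" using t by simp
  qed
  finally show ?thesis .
qed

lemma final_ineq:
  fixes s t v :: real
  assumes s: "0 < s" "s < 1" and t: "0 < t" and v: "0 \<le> v" and tv: "s * t + v \<le> pi/2"
  shows "0 < cos v - s * sin t * sin v + s^2 * (1 - cos t) * (1 - cos v)"
proof -
  have st: "0 < s * t" using s t by simp
  have vl: "v < pi/2" using st tv by linarith
  have cv: "0 < cos v" using v vl by (intro cos_gt_zero_pi) auto
  have sv: "0 \<le> sin v" "sin v \<le> 1" using sin_ge_zero[of v] v vl by auto
  have key: "s * sin t * sin v < cos v"
  proof (cases "sin t \<le> 0")
    case True
    then have "s * sin t \<le> 0" using s by (simp add: mult_nonneg_nonpos)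
    then have "s * sin t * sin v \<le> 0" using sv by (simp add: mult_nonpos_nonneg)
    then show ?thesis using cv by linarith
  next
    case False
    have "s * sin t * sin v \<le> s * sin t" using False s sv by (simp add: mult_left_le)
    also have "\<dots> < sin (s * t)" using sin_ineq[OF s t] tv v by linarith
    also have "\<dots> = cos (pi/2 - s * t)" by (simp add: cos_sin_eq)
    also have "\<dots> \<le> cos v" using v tv st by (intro cos_monotone_0_pi_le) auto
    finally show ?thesis .
  qed
  have "0 \<le> s^2 * (1 - cos t) * (1 - cos v)" by (intro mult_nonneg_nonneg) auto
  then show ?thesis using key by linarith
qed

lemma ae_interval_contra:
  fixes P :: "real \<Rightarrow> bool"
  assumes ae: "AE t in lborel. t \<in> {0..T} \<longrightarrow> P t" and ab: "a < b" and sub: "{a<..<b} \<subseteq> {0..T}"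
    and np: "\<forall>u\<in>{a<..<b}. \<not> P u"
  shows False
proof -
  from ae obtain N where N: "{x \<in> space lborel. \<not> (x \<in> {0..T} \<longrightarrow> P x)} \<subseteq> N" "emeasure lborel N = 0" "N \<in> sets lborel"
    by (rule AE_E)
  have "{a<..<b} \<subseteq> N"
  proof
    fix x assume x: "x \<in> {a<..<b}"
    then have "x \<in> {x \<in> space lborel. \<not> (x \<in> {0..T} \<longrightarrow> P x)}" using sub np by auto
    then show "x \<in> N" using N(1) by blast
  qed
  then have "emeasure lborel {a<..<b} \<le> emeasure lborel N" by (intro emeasure_mono N(3))
  then show False using N(2) ab by simp
qed

lemma const_arc:
  fixes A :: "real \<Rightarrow> real^3^3"
  assumes val: "\<forall>t\<in>{a<..<b}. A t \<in> {X, Y}" and cont: "\<forall>t\<in>{a<..<b}. isCont A t"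
    and XY: "X $ 1 $ 2 \<noteq> Y $ 1 $ 2" and ab: "a < b"
  shows "\<exists>B\<in>{X,Y}. \<forall>t\<in>{a<..<b}. A t = B"
proof -
  have pw: "A u = A v" if uv: "u \<in> {a<..<b}" "v \<in> {a<..<b}" "u \<le> v" for u v
  proof (rule ccontr)
    assume ne: "A u \<noteq> A v"
    define f where "f t = A t $ 1 $ 2" for t
    have cf: "continuous_on {u..v} f" unfolding f_def
      using uv cont by (intro continuous_at_imp_continuous_on) auto
    have "A u \<in> {X,Y}" "A v \<in> {X,Y}" using val uv by auto
    then have uvXY: "(A u = X \<and> A v = Y) \<or> (A u = Y \<and> A v = X)" using ne by (metis insertE empty_iff)
    then have fne: "f u \<noteq> f v" using XY unfolding f_def by (elim disjE conjE) simp_all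
    define y where "y = (f u + f v) / 2"
    have "\<exists>w. u \<le> w \<and> w \<le> v \<and> f w = y"
    proof (cases "f u \<le> f v")
      case True then show ?thesis using IVT'[of f u y v, OF _ _ uv(3) cf] by (auto simp: y_def)
    next
      case False then show ?thesis using IVT2'[of f v y u, OF _ _ uv(3) cf] by (auto simp: y_def)
    qed
    then obtain w where w: "u \<le> w" "w \<le> v" "f w = y" by blast
    have "w \<in> {a<..<b}" using w uv by auto
    then have "A w \<in> {X,Y}" using val by blast
    then have "A w = A u \<or> A w = A v" using uvXY by (metis insertE empty_iff)
    then have "f w = f u \<or> f w = f v" by (auto simp: f_def)
    then show False using w fne by (auto simp: y_def)
  qed
  define m where "m = (a + b) / 2"
  have m: "m \<in> {a<..<b}" using ab by (auto simp: m_def)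
  have all: "\<forall>t\<in>{a<..<b}. A t = A m"
  proof
    fix t assume t: "t \<in> {a<..<b}"
    show "A t = A m"
    proof (cases "t \<le> m")
      case True then show ?thesis using pw[OF t m] by simp
    next
      case False then show ?thesis using pw[OF m t] by simp
    qed
  qed
  have "A m \<in> {X,Y}" using val m by blast
  then show ?thesis using all by (intro bexI[of _ "A m"]) auto
qed


lemma deriv_inner_M:
  fixes p \<psi> :: "real \<Rightarrow> real^3" and A M :: "real^3^3"
  assumes p: "(p has_vector_derivative (- (transpose A *v p t))) (at t)"
    and q: "(\<psi> has_vector_derivative (A *v \<psi> t)) (at t)"
  shows "((\<lambda>t. p t \<bullet> (M *v \<psi> t)) has_real_derivative (p t \<bullet> ((M ** A - A ** M) *v \<psi> t))) (at t)"
proof -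
  have q': "((\<lambda>t. M *v \<psi> t) has_vector_derivative (M *v (A *v \<psi> t))) (at t)"
    using bounded_linear.has_vector_derivative[OF matrix_vector_mul_bounded_linear q] .
  have "((\<lambda>t. p t \<bullet> (M *v \<psi> t)) has_derivative
      (\<lambda>h. p t \<bullet> (h *\<^sub>R (M *v (A *v \<psi> t))) + (h *\<^sub>R (- (transpose A *v p t))) \<bullet> (M *v \<psi> t))) (at t)"
    using has_derivative_inner[OF p[unfolded has_vector_derivative_def] q'[unfolded has_vector_derivative_def]] .
  moreover have "(\<lambda>h. p t \<bullet> (h *\<^sub>R (M *v (A *v \<psi> t))) + (h *\<^sub>R (- (transpose A *v p t))) \<bullet> (M *v \<psi> t))
     = (\<lambda>h. (p t \<bullet> ((M ** A - A ** M) *v \<psi> t)) * h)"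
    by (auto simp: fun_eq_iff matrix_vector_mul_assoc matrix_vector_mult_diff_rdistrib inner_diff_right
        dot_lmul_matrix algebra_simps)
  ultimately show ?thesis
    by (simp add: has_field_derivative_def)
qed

lemma deriv_comp:
  fixes \<psi> :: "real \<Rightarrow> real^3"
  assumes "(\<psi> has_vector_derivative v) (at t)"
  shows "((\<lambda>t. \<psi> t $ i) has_real_derivative v $ i) (at t)"
  using bounded_linear.has_vector_derivative[OF bounded_linear_vec_nth assms]
  by (simp add: has_real_derivative_iff_has_vector_derivative)

lemma psi0_nth: "psi0 g $ 1 = 0" "psi0 g $ 2 = sin g" "psi0 g $ 3 = cos g"
  by (simp_all add: psi0_def)

lemma axis_nth3: "axis 1 (1::real) $ (1::3) = 1" "axis 1 (1::real) $ (2::3) = 0" "axis 1 (1::real) $ (3::3) = 0"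
  by (simp_all add: axis_def)

lemma X_e1: "Xm g *v axis 1 1 = (- sin g) *\<^sub>R psi0 g"
  by (simp add: vec_eq_iff forall_3 Xm_mv axis_nth3 psi0_nth power2_eq_square)

lemma X_psi0: "Xm g *v psi0 g = sin g *\<^sub>R axis 1 1"
proof -
  have e: "\<And>x. cos g * (cos g * x) = x - sin g * (sin g * x)" by (rule cc_rule)
  show ?thesis
    by (simp add: vec_eq_iff forall_3 Xm_mv axis_nth3 psi0_nth power2_eq_square algebra_simps e)
qed

lemma pureX:
  assumes g: "0 < g" "g < pi/2"
  defines "s \<equiv> sin g"
  shows "admissible g (\<lambda>t. Xm g) (\<lambda>t. sin (s * t) *\<^sub>R axis 1 1 + cos (s * t) *\<^sub>R psi0 g) (pi / (2 * s))
     \<and> inSigma ((\<lambda>t. sin (s * t) *\<^sub>R axis 1 1 + cos (s * t) *\<^sub>R psi0 g) (pi / (2 * s)))"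
proof -
  have s0: "0 < s" unfolding s_def using g by (intro sin_gt_zero) auto
  have cd: "control_disc (\<lambda>t. Xm g) (pi / (2 * s)) = {}"
    unfolding control_disc_def by simp
  have d: "((\<lambda>t. sin (s * t) *\<^sub>R axis 1 1 + cos (s * t) *\<^sub>R psi0 g) has_vector_derivative
      (Xm g *v (sin (s * t) *\<^sub>R axis 1 1 + cos (s * t) *\<^sub>R psi0 g))) (at t within X)" for t X
  proof -
    have ds: "((\<lambda>x. sin (s * x)) has_real_derivative cos (s * t) * s) (at t within X)"
      by (auto intro!: derivative_eq_intros)
    have dc: "((\<lambda>x. cos (s * x)) has_real_derivative - sin (s * t) * s) (at t within X)"
      by (auto intro!: derivative_eq_intros)
    have "((\<lambda>t. sin (s * t) *\<^sub>R axis 1 1 + cos (s * t) *\<^sub>R psi0 g) has_vector_derivative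
      ((sin (s * t) *\<^sub>R 0 + (cos (s * t) * s) *\<^sub>R axis 1 1) + (cos (s * t) *\<^sub>R 0 + (- sin (s * t) * s) *\<^sub>R psi0 g))) (at t within X)"
      by (intro has_vector_derivative_add has_vector_derivative_scaleR has_vector_derivative_const ds dc)
    moreover have "(sin (s * t) *\<^sub>R 0 + (cos (s * t) * s) *\<^sub>R axis 1 1) + (cos (s * t) *\<^sub>R 0 + (- sin (s * t) * s) *\<^sub>R psi0 g)
        = Xm g *v (sin (s * t) *\<^sub>R axis 1 1 + cos (s * t) *\<^sub>R psi0 g)"
      by (simp add: matrix_vector_right_distrib scaleR_matrix_vector_assoc X_e1 X_psi0 s_def algebra_simps)
    ultimately show ?thesis by simp
  qed
  have T: "0 \<le> pi / (2 * s)" using s0 by simp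
  have cont: "continuous_on {0..pi / (2 * s)} (\<lambda>t. sin (s * t) *\<^sub>R axis 1 1 + cos (s * t) *\<^sub>R psi0 g)"
    by (intro continuous_intros)
  have sig: "inSigma ((\<lambda>t. sin (s * t) *\<^sub>R axis 1 1 + cos (s * t) *\<^sub>R psi0 g) (pi / (2 * s)))"
  proof -
    have "s * (pi / (2 * s)) = pi / 2" using s0 by simp
    then show ?thesis unfolding inSigma_def using s0
      by (simp add: inner_axis axis_nth3 psi0_nth)
  qed
  show ?thesis unfolding admissible_def using T cont d cd sig by auto
qed

lemma mv_neg: "(- (M::real^3^3)) *v x = - (M *v x)"
  by (simp add: vec_eq_iff matrix_vector_mult_def sum_negf)

lemma mv_scale: "(c *\<^sub>R (M::real^3^3)) *v x = c *\<^sub>R (M *v x)"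
  by (simp add: vec_eq_iff matrix_vector_mult_def sum_distrib_left algebra_simps)


theorem mainTheorem13:
  fixes \<gamma> :: real and A :: "real \<Rightarrow> real^3^3" and \<psi> p :: "real \<Rightarrow> real^3" and T :: real
  assumes "0 < \<gamma>" and "\<gamma> < pi / 2"
    and "regular_extremal \<gamma> A \<psi> T p"
    and "time_optimal \<gamma> A \<psi> T"
  shows "card (switching_times A T) \<le> 2 \<and>
         (bang_pattern A T = [Xm \<gamma>] \<or> bang_pattern A T = [Xm \<gamma>, Ym, Xm \<gamma>])"
proof -
  define s where "s = sin \<gamma>"
  define c where "c = cos \<gamma>"
  have s0: "0 < s" unfolding s_def using assms(1,2) by (intro sin_gt_zero) auto
  have s1: "s < 1" unfolding s_def using assms(1,2) sin_monotone_2pi[of \<gamma> "pi/2"] by simp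
  have c0: "0 < c" unfolding c_def using assms(1,2) by (intro cos_gt_zero) auto
  have sc: "s^2 + c^2 = 1" unfolding s_def c_def by simp
  let ?X = "Xm \<gamma>" and ?Y = "Ym"
  have ss: "s * s < s" using s0 s1 by (simp add: mult_less_cancel_left_pos)
  have XY12: "?X $ 1 $ 2 \<noteq> ?Y $ 1 $ 2" using ss s1 by (simp add: Xm_nth Ym_nth s_def[symmetric] power2_eq_square)
  from assms(3) have NE: "normal_extremal \<gamma> A \<psi> T p"
    and iso: "\<forall>t\<in>{0..T}. phi1 \<gamma> \<psi> p t = 0 \<longrightarrow>
        (\<exists>e>0. \<forall>u\<in>{0..T}. phi1 \<gamma> \<psi> p u = 0 \<and> \<bar>u - t\<bar> < e \<longrightarrow> u = t)"
    and sw: "\<forall>t \<in> switching_times A T. phi1 \<gamma> \<psi> p t = 0 \<and> phi2 \<gamma> \<psi> p t \<noteq> 0"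
    unfolding regular_extremal_def by auto
  from NE have adm: "admissible \<gamma> A \<psi> T" and contp: "continuous_on {0..T} p"
    and dp: "\<forall>t \<in> {0..T} - control_disc A T.
        (p has_vector_derivative (- (transpose (A t) *v p t))) (at t within {0..T})"
    and maxc: "AE t in lborel. t \<in> {0..T} \<longrightarrow>
        p t \<bullet> (A t *v \<psi> t) - 1 = max (p t \<bullet> (Xm \<gamma> *v \<psi> t) - 1) (p t \<bullet> (Ym *v \<psi> t) - 1)"
    unfolding normal_extremal_def by auto
  from adm have T0: "0 \<le> T" and Aval: "\<forall>t\<in>{0..T}. A t \<in> {?X, ?Y}"
    and finD: "finite (control_disc A T)" and contpsi: "continuous_on {0..T} \<psi>"
    and psi_0: "\<psi> 0 = psi0 \<gamma>"
    and dpsi: "\<forall>t \<in> {0..T} - control_disc A T. (\<psi> has_vector_derivative (A t *v \<psi> t)) (at t within {0..T})"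
    unfolding admissible_def by auto
  from assms(4) have sig: "inSigma (\<psi> T)"
    and opt: "\<forall>A' \<psi>' T'. admissible \<gamma> A' \<psi>' T' \<and> inSigma (\<psi>' T') \<longrightarrow> T \<le> T'"
    unfolding time_optimal_def by auto
  define S where "S = switching_times A T"
  have SD: "S \<subseteq> control_disc A T" unfolding S_def switching_times_def control_disc_def by auto
  have finS: "finite S" using finite_subset[OF SD finD] .
  have notD: "t \<notin> control_disc A T" if "t \<in> {0<..<T}" "t \<notin> S" for t
    using that unfolding S_def switching_times_def control_disc_def by auto
  have atT: "at t within {0..T} = at t" if "t \<in> {0<..<T}" for t
    using that by (intro at_within_Icc_at) auto
  have contA: "isCont A t" if "t \<in> {0<..<T}" "t \<notin> S" for t
    using that atT[OF that(1)] unfolding S_def switching_times_def by auto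
  have dpsi': "(\<psi> has_vector_derivative (A t *v \<psi> t)) (at t)" if "t \<in> {0<..<T}" "t \<notin> S" for t
  proof -
    have "t \<in> {0..T} - control_disc A T" using notD[OF that] that(1) by auto
    then have "(\<psi> has_vector_derivative (A t *v \<psi> t)) (at t within {0..T})" using dpsi by blast
    then show ?thesis using atT[OF that(1)] by simp
  qed
  have dp': "(p has_vector_derivative (- (transpose (A t) *v p t))) (at t)" if "t \<in> {0<..<T}" "t \<notin> S" for t
  proof -
    have "t \<in> {0..T} - control_disc A T" using notD[OF that] that(1) by auto
    then have "(p has_vector_derivative (- (transpose (A t) *v p t))) (at t within {0..T})" using dp by blast
    then show ?thesis using atT[OF that(1)] by simp
  qed
  define f1 where "f1 = phi1 \<gamma> \<psi> p"
  define f2 where "f2 = phi2 \<gamma> \<psi> p"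
  have cf1: "continuous_on {0..T} f1" unfolding f1_def phi1_def[abs_def]
    by (intro continuous_intros contp bounded_linear.continuous_on[OF matrix_vector_mul_bounded_linear contpsi])
  have cf2: "continuous_on {0..T} f2" unfolding f2_def phi2_def[abs_def]
    by (intro continuous_intros contp bounded_linear.continuous_on[OF matrix_vector_mul_bounded_linear contpsi])
  have df1: "(f1 has_real_derivative f2 t) (at t)" if "t \<in> {0<..<T}" "t \<notin> S" for t
  proof -
    have D: "(f1 has_real_derivative (p t \<bullet> ((F1 \<gamma> ** A t - A t ** F1 \<gamma>) *v \<psi> t))) (at t)"
      unfolding f1_def phi1_def[abs_def] by (rule deriv_inner_M[OF dp'[OF that] dpsi'[OF that]])
    have "A t \<in> {?X, ?Y}" using Aval that by auto
    then have "F1 \<gamma> ** A t - A t ** F1 \<gamma> = F2 \<gamma>" using F1_X F1_Y by auto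
    then show ?thesis using D by (simp add: f2_def phi2_def)
  qed
  have df2: "(f2 has_real_derivative -(s^2 * f1 t)) (at t)" if "t \<in> {0<..<T}" "t \<notin> S" "A t = ?X" for t
  proof -
    have D: "(f2 has_real_derivative (p t \<bullet> ((F2 \<gamma> ** A t - A t ** F2 \<gamma>) *v \<psi> t))) (at t)"
      unfolding f2_def phi2_def[abs_def] by (rule deriv_inner_M[OF dp'[OF that(1,2)] dpsi'[OF that(1,2)]])
    then show ?thesis using that(3) F2_X[of \<gamma>]
      by (simp add: f1_def phi1_def s_def mv_scale mv_neg)
  qed
  have comp: "((\<lambda>t. \<psi> t $ i) has_real_derivative (A t *v \<psi> t) $ i) (at t)" if "t \<in> {0<..<T}" "t \<notin> S" for t i
    by (rule deriv_comp[OF dpsi'[OF that]])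
  have ccomp: "continuous_on {0..T} (\<lambda>t. \<psi> t $ i)" for i
    by (rule bounded_linear.continuous_on[OF bounded_linear_vec_nth contpsi])
  have f1_0: "f1 0 = 0" unfolding f1_def phi1_def using psi_0 F1_psi0 by simp
  have psiT3: "\<psi> T $ 3 = 0" using sig unfolding inSigma_def by (simp add: inner_axis)
  have Tb: "T \<le> pi / (2 * s)" using opt pureX[OF assms(1,2)] unfolding s_def by blast
  have sT: "s * T \<le> pi / 2" using Tb s0 by (simp add: field_simps)
  have Tpos: "0 < T"
  proof (rule ccontr)
    assume "\<not> 0 < T" then have "T = 0" using T0 by simp
    then show False using psiT3 psi_0 c0 by (simp add: psi0_nth c_def)
  qed
  have isoF: False if "0 \<le> a" "a < b" "b \<le> T" "\<forall>t\<in>{a..b}. f1 t = 0" for a b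
  proof -
    have "f1 b = 0" using that by auto
    moreover have bT: "b \<in> {0..T}" using that by auto
    ultimately have "\<exists>e>0. \<forall>u\<in>{0..T}. f1 u = 0 \<and> \<bar>u - b\<bar> < e \<longrightarrow> u = b"
      using iso unfolding f1_def by blast
    then obtain e where e: "e > 0" "\<forall>u\<in>{0..T}. f1 u = 0 \<and> \<bar>u - b\<bar> < e \<longrightarrow> u = b"
      by blast
    define u where "u = max a (b - e/2)"
    have u: "u \<in> {a..b}" "u < b" "\<bar>u - b\<bar> < e" using e that by (auto simp: u_def)
    then have "u \<in> {0..T}" "f1 u = 0" using that by auto
    then have "u = b" using e(2) u(3) by blast
    then show False using u(2) by simp
  qed
  have arcX: False if "0 \<le> a" "a < b" "b \<le> T" "\<forall>t\<in>{a<..<b}. t \<notin> S \<and> A t = ?X" "f1 a = 0" "f1 b = 0" for a b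
  proof -
    have sub: "{a..b} \<subseteq> {0..T}" using that by auto
    have "s * (b - a) < pi"
    proof -
      have "s * (b - a) \<le> s * T" using that s0 by (intro mult_left_mono) auto
      then show ?thesis using sT pi_gt_zero by linarith
    qed
    moreover have "\<forall>t\<in>{a..b}. f1 t = 0"
      using that(2) calculation
    proof (rule xarc_lemma[OF s0])
      show "continuous_on {a..b} f1" by (rule continuous_on_subset[OF cf1 sub])
      show "continuous_on {a..b} f2" by (rule continuous_on_subset[OF cf2 sub])
      fix t assume t: "a < t" "t < b"
      then have "t \<in> {0<..<T}" "t \<notin> S" "A t = ?X" using that by auto
      then show "(f1 has_real_derivative f2 t) (at t)" "(f2 has_real_derivative -(s^2 * f1 t)) (at t)"
        using df1 df2 by auto
    qed (use that in auto)
    then show False using isoF that by auto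
  qed
  have Yarc: "\<psi> b $ 1 = s * sin b \<and> \<psi> b $ 2 = s * cos b \<and> \<psi> b $ 3 = c"
    if "0 < b" "b \<le> T" "\<forall>t\<in>{0<..<b}. t \<notin> S \<and> A t = ?Y" for b
  proof -
    have sub: "{0..b} \<subseteq> {0..T}" using that by auto
    have dd: "t \<in> {0<..<T}" "t \<notin> S" "A t = ?Y" if "0 < t" "t < b" for t
      using that \<open>0 < b\<close> \<open>b \<le> T\<close> \<open>\<forall>t\<in>{0<..<b}. t \<notin> S \<and> A t = ?Y\<close> by auto
    have d1: "((\<lambda>t. \<psi> t $ 1) has_real_derivative 1 * \<psi> t $ 2) (at t)" if "0 < t" "t < b" for t
      using comp[OF dd(1,2)[OF that], of 1] dd(3)[OF that] by (simp add: Ym_mv)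
    have d2: "((\<lambda>t. \<psi> t $ 2) has_real_derivative -(1 * \<psi> t $ 1)) (at t)" if "0 < t" "t < b" for t
      using comp[OF dd(1,2)[OF that], of 2] dd(3)[OF that] by (simp add: Ym_mv)
    have d3: "((\<lambda>t. \<psi> t $ 3) has_real_derivative 0) (at t)" if "0 < t" "t < b" for t
      using comp[OF dd(1,2)[OF that], of 3] dd(3)[OF that] by (simp add: Ym_mv)
    note R = rot_lemma[of 0 b "\<lambda>t. \<psi> t $ 1" "\<lambda>t. \<psi> t $ 2" 1 b, OF _ continuous_on_subset[OF ccomp sub]
        continuous_on_subset[OF ccomp sub] d1 d2]
    have "\<psi> b $ 3 = \<psi> 0 $ 3"
      by (rule DERIV_isconst_end[OF that(1) continuous_on_subset[OF ccomp sub] d3])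
    then show ?thesis using R that psi_0 by (simp add: psi0_nth s_def c_def)
  qed
  have Snone: "S = {}"
  proof (rule ccontr)
    assume Sne: "S \<noteq> {}"
    define t1 where "t1 = Min S"
    have t1S: "t1 \<in> S" using Sne finS by (simp add: t1_def)
    have t1min: "\<forall>t\<in>S. t1 \<le> t" using finS by (simp add: t1_def)
    have t1T: "0 < t1" "t1 < T" using t1S unfolding S_def switching_times_def by auto
    have sw1: "f1 t1 = 0" "f2 t1 \<noteq> 0" using sw t1S unfolding S_def f1_def f2_def by auto
    have arc0: "\<forall>t\<in>{0<..<t1}. t \<notin> S" using t1min by force
    obtain A0 where A0: "A0 \<in> {?X, ?Y}" "\<forall>t\<in>{0<..<t1}. A t = A0"
      using const_arc[of 0 t1 A ?X ?Y] Aval arc0 contA t1T XY12 by auto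
    show False
    proof (cases "A0 = ?X")
      case True
      show False by (rule arcX[of 0 t1]) (use t1T arc0 A0 True f1_0 sw1 in auto)
    next
      case False
      then have A0Y: "A0 = ?Y" using A0 by auto
      define S' where "S' = S - {t1}"
      define t2 where "t2 = (if S' = {} then T else Min S')"
      have finS': "finite S'" using finS by (simp add: S'_def)
      have t2S': "S' \<noteq> {} \<Longrightarrow> t2 \<in> S'" using Min_in[OF finS'] by (simp add: t2_def)
      have t2S: "S' \<noteq> {} \<Longrightarrow> t2 \<in> S" using t2S' by (auto simp: S'_def)
      have t2T: "t2 \<le> T"
      proof (cases "S' = {}")
        case True then show ?thesis by (simp add: t2_def)
      next
        case False then have "t2 \<in> S" by (rule t2S)
        then show ?thesis unfolding S_def switching_times_def by auto
      qed
      have t12: "t1 < t2"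
      proof (cases "S' = {}")
        case True then show ?thesis using t1T by (simp add: t2_def)
      next
        case False
        then have "t2 \<in> S'" using t2S' by simp
        then show ?thesis using t1min by (force simp: S'_def)
      qed
      have arc1: "\<forall>t\<in>{t1<..<t2}. t \<notin> S"
      proof
        fix t assume t: "t \<in> {t1<..<t2}"
        show "t \<notin> S"
        proof
          assume "t \<in> S"
          then have "t \<in> S'" "S' \<noteq> {}" using t by (auto simp: S'_def)
          then have "t2 \<le> t" using finS' by (simp add: t2_def)
          then show False using t by auto
        qed
      qed
      obtain A1 where A1: "A1 \<in> {?X, ?Y}" "\<forall>t\<in>{t1<..<t2}. A t = A1"
        using const_arc[of t1 t2 A ?X ?Y] Aval arc1 contA t1T t2T t12 XY12 by auto
      show False
      proof (cases "A1 = ?X")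
        case A1X: True
        show False
        proof (cases "S' = {}")
          case False
          have "f1 t2 = 0" using sw t2S[OF False] unfolding S_def f1_def by auto
          then show False by (intro arcX[of t1 t2]) (use t1T t2T t12 arc1 A1 A1X sw1 in auto)
        next
          case True
          then have t2T': "t2 = T" by (simp add: t2_def)
          have Y1: "\<psi> t1 $ 1 = s * sin t1 \<and> \<psi> t1 $ 2 = s * cos t1 \<and> \<psi> t1 $ 3 = c"
            by (rule Yarc) (use t1T arc0 A0 A0Y in auto)
          have sub: "{t1..T} \<subseteq> {0..T}" using t1T by auto
          have dd: "t \<in> {0<..<T}" "t \<notin> S" "A t = ?X" if "t1 < t" "t < T" for t
            using that t1T arc1 A1 A1X t2T' by auto
          define g where "g t = s * \<psi> t $ 2 + c * \<psi> t $ 3" for t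
          define n where "n t = c * \<psi> t $ 2 - s * \<psi> t $ 3" for t
          have cg: "continuous_on {t1..T} g" unfolding g_def
            by (intro continuous_intros continuous_on_subset[OF ccomp sub])
          have cn: "continuous_on {t1..T} n" unfolding n_def
            by (intro continuous_intros continuous_on_subset[OF ccomp sub])
          have d1: "((\<lambda>t. \<psi> t $ 1) has_real_derivative s * g t) (at t)" if "t1 < t" "t < T" for t
            using comp[OF dd(1,2)[OF that], of 1] dd(3)[OF that]
            by (simp add: Xm_mv g_def s_def[symmetric] c_def[symmetric] power2_eq_square algebra_simps)
          have dg: "(g has_real_derivative -(s * \<psi> t $ 1)) (at t)" if "t1 < t" "t < T" for t
          proof -
            have "(g has_real_derivative s * (A t *v \<psi> t) $ 2 + c * (A t *v \<psi> t) $ 3) (at t)"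
              unfolding g_def[abs_def]
              by (intro DERIV_add DERIV_cmult comp[OF dd(1,2)[OF that]])
            moreover have "s * (A t *v \<psi> t) $ 2 + c * (A t *v \<psi> t) $ 3 = -(s * \<psi> t $ 1)"
            proof -
              have "s * (A t *v \<psi> t) $ 2 + c * (A t *v \<psi> t) $ 3 = -(s * \<psi> t $ 1) * (s^2 + c^2)"
                using dd(3)[OF that] by (simp add: Xm_mv s_def[symmetric] c_def[symmetric] power2_eq_square algebra_simps)
              then show ?thesis using sc by simp
            qed
            ultimately show ?thesis by simp
          qed
          have dn: "(n has_real_derivative 0) (at t)" if "t1 < t" "t < T" for t
          proof -
            have "(n has_real_derivative c * (A t *v \<psi> t) $ 2 - s * (A t *v \<psi> t) $ 3) (at t)"
              unfolding n_def[abs_def]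
              by (intro DERIV_diff DERIV_cmult comp[OF dd(1,2)[OF that]])
            moreover have "c * (A t *v \<psi> t) $ 2 - s * (A t *v \<psi> t) $ 3 = 0"
              using dd(3)[OF that] by (simp add: Xm_mv s_def[symmetric] c_def[symmetric] power2_eq_square algebra_simps)
            ultimately show ?thesis by simp
          qed
          have R: "g T = g t1 * cos (s*(T-t1)) - \<psi> t1 $ 1 * sin (s*(T-t1))"
            using rot_lemma(2)[of t1 T "\<lambda>t. \<psi> t $ 1" g s T, OF _ continuous_on_subset[OF ccomp sub] cg d1 dg]
              t1T by auto
          have N: "n T = n t1" by (rule DERIV_isconst_end[OF t1T(2) cn dn])
          have P3: "\<psi> T $ 3 = c * g T - s * n T"
          proof -
            have "c * g T - s * n T = \<psi> T $ 3 * (s^2 + c^2)"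
              by (simp add: g_def n_def power2_eq_square algebra_simps)
            then show ?thesis using sc by simp
          qed
          define v where "v = s * (T - t1)"
          have c2: "c^2 = 1 - s^2" using sc by simp
          have "\<psi> T $ 3 = c * (cos v - s * sin t1 * sin v + s^2 * (1 - cos t1) * (1 - cos v))"
            unfolding P3 N R v_def[symmetric] using Y1
            by (simp add: g_def n_def algebra_simps power2_eq_square c2[unfolded power2_eq_square])
          moreover have "0 < cos v - s * sin t1 * sin v + s^2 * (1 - cos t1) * (1 - cos v)"
            using final_ineq[OF s0 s1 t1T(1), of v] t1T s0 sT
            by (simp add: v_def algebra_simps)
          ultimately have "\<psi> T $ 3 > 0" using c0 by simp
          then show False using psiT3 by simp
        qed
      next
        case False
        then have A1Y: "A1 = ?Y" using A1 by auto
        have ct1: "isCont f2 t1"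
          using continuous_on_interior[OF cf2, of t1] t1T by (simp add: interior_atLeastAtMost_real)
        have AY: "A u = ?Y" if "u \<in> {0<..<t2}" "u \<noteq> t1" for u
          using that A0 A0Y A1 A1Y by (cases "u < t1") auto
        have dfu: "(f1 has_derivative (*) (f2 x)) (at x)" if "x \<in> {0<..<t2}" "x \<noteq> t1" for x
        proof -
          have "x \<in> {0<..<T}" "x \<notin> S" using that t2T arc0 arc1 by (cases "x < t1"; auto)+
          then show ?thesis using df1 by (simp add: has_field_derivative_def)
        qed
        have notP: "\<not> (p u \<bullet> (A u *v \<psi> u) - 1 = max (p u \<bullet> (Xm \<gamma> *v \<psi> u) - 1) (p u \<bullet> (Ym *v \<psi> u) - 1))"
          if "u \<in> {0<..<t2}" "u \<noteq> t1" "f1 u > 0" for u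
        proof
          assume P: "p u \<bullet> (A u *v \<psi> u) - 1 = max (p u \<bullet> (Xm \<gamma> *v \<psi> u) - 1) (p u \<bullet> (Ym *v \<psi> u) - 1)"
          have "p u \<bullet> (Xm \<gamma> *v \<psi> u) \<le> p u \<bullet> (Ym *v \<psi> u)" using P AY[OF that(1,2)] by (simp add: max_def split: if_splits)
          moreover have "f1 u = p u \<bullet> (Xm \<gamma> *v \<psi> u) - p u \<bullet> (Ym *v \<psi> u)"
            by (simp add: f1_def phi1_def F1_def matrix_vector_mult_diff_rdistrib inner_diff_right)
          ultimately show False using that(3) by simp
        qed
        show False
        proof (cases "f2 t1 > 0")
          case True
          obtain d where d: "d > 0" "\<forall>x. x \<noteq> t1 \<and> \<bar>t1 - x\<bar> < d \<longrightarrow> 0 < f2 x"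
            using LIM_fun_gt_zero[OF ct1[unfolded isCont_def] True] by blast
          define b where "b = t1 + min d (t2 - t1)"
          have b: "t1 < b" "b \<le> t2" using d t12 by (auto simp: b_def)
          have pos: "f1 u > 0" if "u \<in> {t1<..<b}" for u
          proof -
            have cu: "continuous_on {t1..u} f1" using that b t2T t1T by (intro continuous_on_subset[OF cf1]) auto
            have u: "t1 < u" "u < b" using that by auto
            have dfx: "(f1 has_derivative (*) (f2 x)) (at x)" if "t1 < x" "x < u" for x
              using dfu[of x] that u b t1T by auto
            obtain xi where xi: "t1 < xi" "xi < u" "f1 u - f1 t1 = f2 xi * (u - t1)"
              using mvt[OF u(1) cu dfx] by blast
            have "f2 xi > 0" using d xi that by (auto simp: b_def)
            then show ?thesis using xi sw1 that by simp
          qed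
          show False
          proof (rule ae_interval_contra[OF maxc b(1)])
            show "{t1<..<b} \<subseteq> {0..T}" using b t2T t1T by auto
            show "\<forall>u\<in>{t1<..<b}. \<not> (p u \<bullet> (A u *v \<psi> u) - 1 = max (p u \<bullet> (Xm \<gamma> *v \<psi> u) - 1) (p u \<bullet> (Ym *v \<psi> u) - 1))"
              using notP pos b t1T by auto
          qed
        next
          case False
          then have neg: "f2 t1 < 0" using sw1 by simp
          obtain d where d: "d > 0" "\<forall>x. x \<noteq> t1 \<and> \<bar>t1 - x\<bar> < d \<longrightarrow> f2 x < 0"
            using LIM_fun_less_zero[OF ct1[unfolded isCont_def] neg] by blast
          define a where "a = t1 - min d t1"
          have a: "a < t1" "0 \<le> a" using d t1T by (auto simp: a_def)
          have pos: "f1 u > 0" if "u \<in> {a<..<t1}" for u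
          proof -
            have cu: "continuous_on {u..t1} f1" using that a t1T by (intro continuous_on_subset[OF cf1]) auto
            have u: "a < u" "u < t1" using that by auto
            have dfx: "(f1 has_derivative (*) (f2 x)) (at x)" if "u < x" "x < t1" for x
              using dfu[of x] that u a t12 by auto
            obtain xi where xi: "u < xi" "xi < t1" "f1 t1 - f1 u = f2 xi * (t1 - u)"
              using mvt[OF u(2) cu dfx] by blast
            have "f2 xi < 0" using d xi that by (auto simp: a_def)
            then have "f2 xi * (t1 - u) < 0" using that by (simp add: mult_neg_pos)
            then show ?thesis using xi sw1 by simp
          qed
          show False
          proof (rule ae_interval_contra[OF maxc a(1)])
            show "{a<..<t1} \<subseteq> {0..T}" using a t1T by auto
            show "\<forall>u\<in>{a<..<t1}. \<not> (p u \<bullet> (A u *v \<psi> u) - 1 = max (p u \<bullet> (Xm \<gamma> *v \<psi> u) - 1) (p u \<bullet> (Ym *v \<psi> u) - 1))"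
              using notP pos a t12 by auto
          qed
        qed
      qed
    qed
  qed
  obtain A0 where A0: "A0 \<in> {?X, ?Y}" "\<forall>t\<in>{0<..<T}. A t = A0"
    using const_arc[of 0 T A ?X ?Y] Aval Snone contA Tpos XY12 by auto
  have A0X: "A0 = ?X"
  proof (rule ccontr)
    assume "A0 \<noteq> ?X"
    then have "A0 = ?Y" using A0 by auto
    then have "\<psi> T $ 3 = c" using Yarc[of T] Tpos A0 Snone by auto
    then show False using psiT3 c0 by simp
  qed
  have "A (T/2) = ?X" using A0 A0X Tpos by auto
  then have "bang_pattern A T = [?X]"
    using Snone unfolding bang_pattern_def S_def by simp
  then show ?thesis using Snone unfolding S_def by simp
qed

end
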